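(* Let $G$ be a finitely generated group with $\nabla G>0$, and let $A,B$ be finitely generated subgroups of infinite proindex in $G$. Then there exist finite index subgroups $A_0\le A$ and $B_0\le B$ such that $\langle A_0\cup B_0\rangle$ has infinite index in $G$.
   Context: For a group $U$, $d(U)$ denotes the minimal cardinality of a generating set of $U$. The rank gradient of a finitely generated group $G$ is $\nabla G=\inf_U \frac{d(U)-1}{[G:U]}$, where $U$ ranges over all finite index subgroups of $G$. The proindex of a subgroup $H$ in $G$ is the supremum of the indices $[G:U]$ over finite index subgroups $U$ of $G$ containing $H$. *)

theory Defs
  imports "HOL-Algebra.Algebra" "HOL-Library.Extended_Nat"
begin

definition fin_gen :: "('a, 'b) monoid_scheme \<Rightarrow> 'a set \<Rightarrow> bool" where
  "fin_gen G H \<longleftrightarrow> (\<exists>S. finite S \<and> S \<subseteq> H \<and> generate G S = H)"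

definition min_gens :: "('a, 'b) monoid_scheme \<Rightarrow> 'a set \<Rightarrow> nat" where
  "min_gens G H = (LEAST n. \<exists>S. finite S \<and> card S = n \<and> S \<subseteq> H \<and> generate G S = H)"

definition finite_index :: "('a, 'b) monoid_scheme \<Rightarrow> 'a set \<Rightarrow> bool" where
  "finite_index G U \<longleftrightarrow> subgroup U G \<and> finite (rcosets\<^bsub>G\<^esub> U)"

definition group_index :: "('a, 'b) monoid_scheme \<Rightarrow> 'a set \<Rightarrow> nat" where
  "group_index G U = card (rcosets\<^bsub>G\<^esub> U)"

definition rank_gradient :: "('a, 'b) monoid_scheme \<Rightarrow> real" where
  "rank_gradient G = (INF U \<in> {U. finite_index G U}.
      (real (min_gens G U) - 1) / real (group_index G U))"

definition proindex :: "('a, 'b) monoid_scheme \<Rightarrow> 'a set \<Rightarrow> enat" where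
  "proindex G H = (SUP U \<in> {U. finite_index G U \<and> H \<subseteq> U}. enat (group_index G U))"

end

theory Submission
  imports Defs
begin

lemma arith_final:
  fixes r :: real and a b j k m N nU nV d :: nat
  assumes r: "r > 0" and N: "real N * r > real a + real b"
    and "N \<le> nU" "N \<le> nV" and mU: "nU * j \<le> m" and mV: "nV * k \<le> m"
    and d: "d \<le> a * j + b * k" and m: "m > 0"
    and le: "r \<le> (real d - 1) / real m"
  shows False
proof -
  have "r * real m \<le> real d - 1" using le m by (simp add: le_divide_eq)
  moreover have "real d \<le> real (a * j + b * k)" using d by (simp only: of_nat_le_iff)
  ultimately have 1: "r * real m < real a * real j + real b * real k" by simp
  have "N * j \<le> nU * j" using assms(3) by (rule mult_le_mono1)
  hence Nj: "N * j \<le> m" using mU by linarith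
  have "N * k \<le> nV * k" using assms(4) by (rule mult_le_mono1)
  hence Nk: "N * k \<le> m" using mV by linarith
  have "real N * (real a * real j + real b * real k) = real a * (real N * real j) + real b * (real N * real k)"
    by (simp add: algebra_simps)
  also have "\<dots> \<le> real a * real m + real b * real m"
    using Nj Nk by (intro add_mono mult_left_mono) (simp_all flip: of_nat_mult)
  also have "\<dots> = (real a + real b) * real m" by (simp add: algebra_simps)
  also have "\<dots> \<le> (real N * r) * real m" using N m by (intro mult_right_mono) auto
  finally have 2: "real N * (real a * real j + real b * real k) \<le> real N * (r * real m)"
    by (simp add: algebra_simps)
  have "N \<noteq> 0" using N by (cases "N = 0") auto
  hence "real N > 0" by simp
  hence "real a * real j + real b * real k \<le> r * real m" using 2 by simp
  thus False using 1 by simp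
qed

context group begin

lemma coset_eq_iff:
  assumes "subgroup H G" "x \<in> carrier G" "y \<in> carrier G"
  shows "(H #> x = H #> y) \<longleftrightarrow> x \<otimes> inv y \<in> H"
proof
  assume "H #> x = H #> y"
  hence "x \<in> H #> y" using rcos_self[OF assms(2,1)] by simp
  thus "x \<otimes> inv y \<in> H" using subgroup.rcos_module_imp[OF assms(1) is_group assms(3)] by blast
next
  assume "x \<otimes> inv y \<in> H"
  hence "x \<in> H #> y" using subgroup.rcos_module_rev[OF assms(1) is_group assms(3,2)] by blast
  thus "H #> x = H #> y" using repr_independence[OF _ assms(3,1)] by simp
qed

lemma index_mono:
  assumes H: "subgroup H G" and K: "subgroup K G" and HK: "H \<subseteq> K"
    and fin: "finite (rcosets H)"
  shows "finite (rcosets K) \<and> card (rcosets K) \<le> card (rcosets H)"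
proof -
  define f where "f C = K #> (SOME x. x \<in> C)" for C
  have fx: "f (H #> x) = K #> x" if x: "x \<in> carrier G" for x
  proof -
    have ex: "\<exists>y. y \<in> H #> x" using rcos_self[OF x H] by blast
    define y where "y = (SOME y. y \<in> H #> x)"
    have y: "y \<in> H #> x" unfolding y_def using someI_ex[OF ex] .
    have yc: "y \<in> carrier G" using subgroup.elemrcos_carrier[OF H is_group x y] .
    have "y \<otimes> inv x \<in> H" using subgroup.rcos_module_imp[OF H is_group x y] .
    hence "y \<otimes> inv x \<in> K" using HK by blast
    hence "K #> y = K #> x" using coset_eq_iff[OF K yc x] by blast
    thus ?thesis unfolding f_def y_def[symmetric] by simp
  qed
  have "rcosets K = f ` (rcosets H)"
    unfolding RCOSETS_def using fx by auto
  thus ?thesis using fin by (simp add: card_image_le)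
qed

lemma rcosets_sub_eq:
  "rcosets\<^bsub>G\<lparr>carrier := A\<rparr>\<^esub> A0 = (\<lambda>a. A0 #> a) ` A"
  unfolding RCOSETS_def r_coset_def by auto

lemma finite_restricted_cosets:
  assumes A: "subgroup A G" and V: "subgroup V G" and fin: "finite (rcosets V)"
  shows "finite ((\<lambda>a. (A \<inter> V) #> a) ` A)"
proof -
  have "(\<lambda>a. (A \<inter> V) #> a) ` A \<subseteq> (\<lambda>C. C \<inter> A) ` (rcosets V)"
  proof
    fix E assume "E \<in> (\<lambda>a. (A \<inter> V) #> a) ` A"
    then obtain a where a: "a \<in> A" and E: "E = (A \<inter> V) #> a" by blast
    have ac: "a \<in> carrier G" using subgroup.mem_carrier[OF A a] .
    have "(A \<inter> V) #> a = (V #> a) \<inter> A"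
    proof
      show "(A \<inter> V) #> a \<subseteq> (V #> a) \<inter> A"
      proof
        fix x assume "x \<in> (A \<inter> V) #> a"
        then obtain h where h: "h \<in> A \<inter> V" "x = h \<otimes> a" unfolding r_coset_def by blast
        have "x \<in> A" using h a subgroup.m_closed[OF A] by blast
        moreover have "x \<in> V #> a" using h unfolding r_coset_def by blast
        ultimately show "x \<in> (V #> a) \<inter> A" by blast
      qed
    next
      show "(V #> a) \<inter> A \<subseteq> (A \<inter> V) #> a"
      proof
        fix x assume x: "x \<in> (V #> a) \<inter> A"
        have xc: "x \<in> carrier G" using x subgroup.mem_carrier[OF A] by blast
        have "x \<otimes> inv a \<in> V" using subgroup.rcos_module_imp[OF V is_group ac] x by blast
        moreover have "x \<otimes> inv a \<in> A" using x subgroup.m_closed[OF A] subgroup.m_inv_closed[OF A a]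
          by blast
        ultimately have "x \<otimes> inv a \<in> A \<inter> V" by blast
        thus "x \<in> (A \<inter> V) #> a"
          using subgroup.rcos_module_rev[OF subgroups_Inter_pair[OF A V] is_group ac xc] by blast
      qed
    qed
    moreover have "V #> a \<in> rcosets V" using rcosetsI[OF subgroup.subset[OF V] ac] .
    ultimately show "E \<in> (\<lambda>C. C \<inter> A) ` (rcosets V)" using E by blast
  qed
  thus ?thesis by (rule finite_subset) (rule finite_imageI[OF fin])
qed


lemma schreier:
  assumes A: "subgroup A G" and SA: "S \<subseteq> A" and gen: "generate G S = A"
    and finS: "finite S"
    and A0: "subgroup A0 G" and A0A: "A0 \<subseteq> A"
    and finR: "finite ((\<lambda>a. A0 #> a) ` A)"
  shows "\<exists>Y. finite Y \<and> Y \<subseteq> A0 \<and> generate G Y = A0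
           \<and> card Y \<le> card S * card ((\<lambda>a. A0 #> a) ` A)"
proof -
  define R where "R = (\<lambda>a. A0 #> a) ` A"
  define r where "r C = (if C = A0 then \<one> else (SOME y. y \<in> C))" for C
  define rep where "rep x = r (A0 #> x)" for x
  have Ac: "\<And>x. x \<in> A \<Longrightarrow> x \<in> carrier G" by (rule subgroup.mem_carrier[OF A])
  have A0c: "A0 \<subseteq> carrier G" using subgroup.subset[OF A0] .
  have rep_in: "rep x \<in> A0 #> x" if x: "x \<in> carrier G" for x
  proof (cases "A0 #> x = A0")
    case True thus ?thesis unfolding rep_def r_def using subgroup.one_closed[OF A0] by simp
  next
    case False
    have ex: "\<exists>y. y \<in> A0 #> x" using rcos_self[OF x A0] by blast
    have "(SOME y. y \<in> A0 #> x) \<in> A0 #> x" using someI_ex[OF ex] .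
    thus ?thesis unfolding rep_def r_def using False by simp
  qed
  have repc: "rep x \<in> carrier G" if x: "x \<in> carrier G" for x
    using subgroup.elemrcos_carrier[OF A0 is_group x rep_in[OF x]] .
  have rep_coset: "A0 #> rep x = A0 #> x" if x: "x \<in> carrier G" for x
    using repr_independence[OF rep_in[OF x] x A0] by simp
  have rep_cong: "A0 #> x = A0 #> y \<Longrightarrow> rep x = rep y" for x y unfolding rep_def by simp
  have rep_rep: "rep (rep x) = rep x" if "x \<in> carrier G" for x
    using rep_cong[OF rep_coset[OF that]] .
  have repA: "rep x \<in> A" if x: "x \<in> A" for x
  proof -
    have "rep x \<otimes> inv x \<in> A0" using subgroup.rcos_module_imp[OF A0 is_group Ac[OF x] rep_in[OF Ac[OF x]]] .
    hence "rep x \<otimes> inv x \<in> A" using A0A by blast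
    hence "rep x \<otimes> inv x \<otimes> x \<in> A" using x subgroup.m_closed[OF A] by blast
    thus ?thesis using repc[OF Ac[OF x]] Ac[OF x] by (simp add: m_assoc)
  qed
  have rep_one: "rep \<one> = \<one>"
    unfolding rep_def r_def using coset_mult_one[OF A0c] by simp
  define T where "T = rep ` A"
  have TA: "T \<subseteq> A" unfolding T_def using repA by blast
  have cardT: "card T \<le> card R"
  proof -
    have "T = r ` R" unfolding T_def R_def rep_def by auto
    thus ?thesis using finR R_def card_image_le by auto
  qed
  have finT: "finite T"
  proof -
    have "T = r ` R" unfolding T_def R_def rep_def by auto
    thus ?thesis using finR R_def by auto
  qed
  have repT: "rep t = t" if "t \<in> T" for t using that unfolding T_def using rep_rep Ac by auto
  define Y where "Y = (\<lambda>(t, s). t \<otimes> s \<otimes> inv (rep (t \<otimes> s))) ` (T \<times> S)"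
  have finY: "finite Y" unfolding Y_def by (intro finite_imageI finite_cartesian_product finT finS)
  have cardY: "card Y \<le> card S * card R"
  proof -
    have "card Y \<le> card (T \<times> S)" unfolding Y_def by (intro card_image_le finite_cartesian_product finT finS)
    also have "\<dots> = card T * card S" by (simp add: card_cartesian_product)
    also have "\<dots> \<le> card S * card R" using cardT by simp
    finally show ?thesis .
  qed
  have elt: "x \<otimes> inv (rep x) \<in> A0" if x: "x \<in> carrier G" for x
  proof -
    have "rep x \<otimes> inv x \<in> A0" using subgroup.rcos_module_imp[OF A0 is_group x rep_in[OF x]] .
    hence "inv (rep x \<otimes> inv x) \<in> A0" using subgroup.m_inv_closed[OF A0] by blast
    thus ?thesis using x repc[OF x] by (simp add: inv_mult_group)
  qed
  have YA0: "Y \<subseteq> A0"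
  proof
    fix y assume "y \<in> Y"
    then obtain t s where ts: "t \<in> T" "s \<in> S" and y: "y = t \<otimes> s \<otimes> inv (rep (t \<otimes> s))"
      unfolding Y_def by auto
    have "t \<in> carrier G" "s \<in> carrier G" using ts TA SA Ac by blast+
    hence "t \<otimes> s \<in> carrier G" by (rule m_closed)
    thus "y \<in> A0" using elt y by simp
  qed
  have YG: "Y \<subseteq> carrier G" using YA0 A0c by blast
  have key: "\<forall>t\<in>T. t \<otimes> g \<otimes> inv (rep (t \<otimes> g)) \<in> generate G Y"
    if g: "g \<in> generate G S" for g
    using g
  proof (induction g rule: generate.induct)
    case one
    show ?case
    proof
      fix t assume tT: "t \<in> T"
      have t: "t \<in> carrier G" using tT TA Ac by blast
      have "t \<otimes> \<one> \<otimes> inv (rep (t \<otimes> \<one>)) = \<one>" using t repT[OF tT] by simp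
      thus "t \<otimes> \<one> \<otimes> inv (rep (t \<otimes> \<one>)) \<in> generate G Y" by (simp add: generate.one)
    qed
  next
    case (incl s)
    show ?case
    proof
      fix t assume tT: "t \<in> T"
      show "t \<otimes> s \<otimes> inv (rep (t \<otimes> s)) \<in> generate G Y"
        unfolding Y_def using tT incl by (auto intro!: generate.incl image_eqI[where x="(t, s)"])
    qed
  next
    case (inv s)
    show ?case
    proof
      fix t assume tT: "t \<in> T"
      have tA: "t \<in> A" using tT TA by blast
      have sA: "s \<in> A" using inv SA by blast
      have t: "t \<in> carrier G" using Ac[OF tA] .
      have s: "s \<in> carrier G" using Ac[OF sA] .
      define u where "u = rep (t \<otimes> inv s)"
      have "t \<otimes> inv s \<in> A" using subgroup.m_closed[OF A tA subgroup.m_inv_closed[OF A sA]] .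
      hence uT: "u \<in> T" unfolding u_def T_def by (rule imageI)
      have uc: "u \<in> carrier G" using uT TA Ac by blast
      have "A0 #> (u \<otimes> s) = A0 #> t"
      proof -
        have "A0 #> (u \<otimes> s) = (A0 #> u) #> s" using coset_mult_assoc[OF A0c uc s] by simp
        also have "\<dots> = (A0 #> (t \<otimes> inv s)) #> s" unfolding u_def using rep_coset t s by simp
        also have "\<dots> = A0 #> t" using coset_mult_assoc[OF A0c, of "t \<otimes> inv s" s] t s
          by (simp add: m_assoc)
        finally show ?thesis .
      qed
      hence "rep (u \<otimes> s) = rep t" by (rule rep_cong)
      hence "rep (u \<otimes> s) = t" using repT[OF tT] by simp
      hence y: "u \<otimes> s \<otimes> inv t \<in> generate G Y" unfolding Y_def using uT inv
        by (auto intro!: generate.incl image_eqI[where x="(u, s)"])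
      have "inv (u \<otimes> s \<otimes> inv t) = t \<otimes> inv s \<otimes> inv u"
        using uc s t by (simp add: inv_mult_group m_assoc)
      thus "t \<otimes> inv s \<otimes> inv (rep (t \<otimes> inv s)) \<in> generate G Y"
        using generate_m_inv_closed[OF YG y] u_def by simp
    qed
  next
    case (eng g1 g2)
    show ?case
    proof
      fix t assume tT: "t \<in> T"
      have g1A: "g1 \<in> A" using eng gen by blast
      have g2A: "g2 \<in> A" using eng gen by blast
      have tA: "t \<in> A" using tT TA by blast
      have g1: "g1 \<in> carrier G" using Ac[OF g1A] .
      have g2: "g2 \<in> carrier G" using Ac[OF g2A] .
      have t: "t \<in> carrier G" using Ac[OF tA] .
      define t1 where "t1 = rep (t \<otimes> g1)"
      have "t \<otimes> g1 \<in> A" using subgroup.m_closed[OF A tA g1A] .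
      hence t1T: "t1 \<in> T" unfolding t1_def T_def by (rule imageI)
      have t1c: "t1 \<in> carrier G" using t1T TA Ac by blast
      have h1: "t \<otimes> g1 \<otimes> inv t1 \<in> generate G Y" using eng.IH(1) tT t1_def by simp
      have h2: "t1 \<otimes> g2 \<otimes> inv (rep (t1 \<otimes> g2)) \<in> generate G Y" using eng.IH(2) t1T by simp
      have "A0 #> (t1 \<otimes> g2) = A0 #> (t \<otimes> g1 \<otimes> g2)"
      proof -
        have "A0 #> (t1 \<otimes> g2) = (A0 #> t1) #> g2" using coset_mult_assoc[OF A0c t1c g2] by simp
        also have "\<dots> = (A0 #> (t \<otimes> g1)) #> g2" unfolding t1_def using rep_coset t g1 by simp
        also have "\<dots> = A0 #> (t \<otimes> g1 \<otimes> g2)" using coset_mult_assoc[OF A0c, of "t \<otimes> g1" g2] t g1 g2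
          by simp
        finally show ?thesis .
      qed
      hence "rep (t1 \<otimes> g2) = rep (t \<otimes> g1 \<otimes> g2)" by (rule rep_cong)
      hence rr: "rep (t1 \<otimes> g2) = rep (t \<otimes> (g1 \<otimes> g2))" using t g1 g2 by (simp add: m_assoc)
      have rc: "rep (t1 \<otimes> g2) \<in> carrier G" using repc t1c g2 by simp
      have "(t \<otimes> g1 \<otimes> inv t1) \<otimes> (t1 \<otimes> g2 \<otimes> inv (rep (t1 \<otimes> g2)))
            = t \<otimes> (g1 \<otimes> g2) \<otimes> inv (rep (t \<otimes> (g1 \<otimes> g2)))"
      proof -
        have cz: "g2 \<otimes> inv (rep (t1 \<otimes> g2)) \<in> carrier G" using g2 rc by simp
        have "inv t1 \<otimes> (t1 \<otimes> (g2 \<otimes> inv (rep (t1 \<otimes> g2)))) = g2 \<otimes> inv (rep (t1 \<otimes> g2))"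
          using t1c cz by (simp add: m_assoc[symmetric])
        thus ?thesis using t g1 g2 t1c rc rr by (simp add: m_assoc)
      qed
      thus "t \<otimes> (g1 \<otimes> g2) \<otimes> inv (rep (t \<otimes> (g1 \<otimes> g2))) \<in> generate G Y"
        using generate.eng[OF h1 h2] by simp
    qed
  qed
  have "A0 \<subseteq> generate G Y"
  proof
    fix g assume gA0: "g \<in> A0"
    have gc: "g \<in> carrier G" using gA0 A0c by blast
    have "\<one> \<in> A" using subgroup.one_closed[OF A] .
    hence oneT: "\<one> \<in> T" unfolding T_def using rep_one by (metis imageI)
    have gg: "g \<in> generate G S" using gA0 A0A gen by blast
    have "\<one> \<otimes> g \<otimes> inv (rep (\<one> \<otimes> g)) \<in> generate G Y" using key[OF gg] oneT by blast
    moreover have "rep g = \<one>"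
      using rep_cong[of g \<one>] rep_one subgroup.rcos_const[OF A0 is_group gA0] coset_mult_one[OF A0c] by simp
    ultimately show "g \<in> generate G Y" using gc by simp
  qed
  moreover have "generate G Y \<subseteq> A0" using generate_subgroup_incl[OF YA0 A0] .
  ultimately show ?thesis using finY YA0 cardY R_def by blast
qed


lemma inv_cancel_l [simp]:
  "x \<in> carrier G \<Longrightarrow> y \<in> carrier G \<Longrightarrow> inv x \<otimes> (x \<otimes> y) = y"
  by (simp add: m_assoc[symmetric])

lemma inv_cancel_r [simp]:
  "x \<in> carrier G \<Longrightarrow> y \<in> carrier G \<Longrightarrow> x \<otimes> (inv x \<otimes> y) = y"
  by (simp add: m_assoc[symmetric])

lemma index_product:
  assumes U: "subgroup U G" and V: "subgroup V G" and A: "subgroup A G" and AU: "A \<subseteq> U"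
    and fin: "finite (rcosets (U \<inter> V))"
  shows "card (rcosets U) * card ((\<lambda>a. (A \<inter> V) #> a) ` A) \<le> card (rcosets (U \<inter> V))"
proof -
  define W where "W = U \<inter> V"
  have W: "subgroup W G" unfolding W_def by (rule subgroups_Inter_pair[OF U V])
  have AV: "subgroup (A \<inter> V) G" by (rule subgroups_Inter_pair[OF A V])
  define RU where "RU = rcosets U"
  define RA where "RA = (\<lambda>a. (A \<inter> V) #> a) ` A"
  define rg where "rg D = (SOME g. g \<in> D)" for D :: "'a set"
  define phi where "phi p = W #> (rg (snd p) \<otimes> rg (fst p))" for p :: "'a set \<times> 'a set"
  have Ac: "\<And>x. x \<in> A \<Longrightarrow> x \<in> carrier G" by (rule subgroup.mem_carrier[OF A])
  have Uc: "\<And>x. x \<in> U \<Longrightarrow> x \<in> carrier G" by (rule subgroup.mem_carrier[OF U])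
  have rgU: "rg D \<in> carrier G \<and> D = U #> rg D" if D: "D \<in> RU" for D
  proof -
    obtain x where x: "x \<in> carrier G" and Dx: "D = U #> x" using D unfolding RU_def RCOSETS_def by blast
    have ex: "\<exists>g. g \<in> D" using rcos_self[OF x U] Dx by blast
    have g: "rg D \<in> D" unfolding rg_def using someI_ex[OF ex] .
    have gc: "rg D \<in> carrier G" using subgroup.elemrcos_carrier[OF U is_group x] g Dx by blast
    have "U #> x = U #> rg D" using repr_independence[OF _ x U] g Dx by blast
    thus ?thesis using gc Dx by simp
  qed
  have rgA: "rg E \<in> A \<and> E = (A \<inter> V) #> rg E" if E: "E \<in> RA" for E
  proof -
    obtain x where x: "x \<in> A" and Ex: "E = (A \<inter> V) #> x" using E unfolding RA_def by blast
    have xc: "x \<in> carrier G" using Ac[OF x] .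
    have ex: "\<exists>g. g \<in> E" using rcos_self[OF xc AV] Ex by blast
    have g: "rg E \<in> E" unfolding rg_def using someI_ex[OF ex] .
    then obtain h where h: "h \<in> A \<inter> V" "rg E = h \<otimes> x" using Ex unfolding r_coset_def by blast
    have gA: "rg E \<in> A" using h x subgroup.m_closed[OF A] by simp
    have "(A \<inter> V) #> x = (A \<inter> V) #> rg E" using repr_independence[OF _ xc AV] g Ex by blast
    thus ?thesis using gA Ex by simp
  qed
  have img: "phi ` (RU \<times> RA) \<subseteq> rcosets W"
  proof
    fix C assume "C \<in> phi ` (RU \<times> RA)"
    then obtain D E where DE: "D \<in> RU" "E \<in> RA" and C: "C = phi (D, E)" by blast
    have "rg E \<otimes> rg D \<in> carrier G" using rgU[OF DE(1)] rgA[OF DE(2)] Ac by simp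
    thus "C \<in> rcosets W" unfolding C phi_def using rcosetsI[OF subgroup.subset[OF W]] by simp
  qed
  have inj: "inj_on phi (RU \<times> RA)"
  proof (rule inj_onI)
    fix p q assume p: "p \<in> RU \<times> RA" and q: "q \<in> RU \<times> RA" and eq: "phi p = phi q"
    obtain D1 E1 where p': "p = (D1, E1)" "D1 \<in> RU" "E1 \<in> RA" using p by blast
    obtain D2 E2 where q': "q = (D2, E2)" "D2 \<in> RU" "E2 \<in> RA" using q by blast
    define g1 where "g1 = rg D1"
    define g2 where "g2 = rg D2"
    define a1 where "a1 = rg E1"
    define a2 where "a2 = rg E2"
    have g1: "g1 \<in> carrier G" and D1: "D1 = U #> g1" using rgU[OF p'(2)] g1_def by auto
    have g2: "g2 \<in> carrier G" and D2: "D2 = U #> g2" using rgU[OF q'(2)] g2_def by auto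
    have a1A: "a1 \<in> A" and E1: "E1 = (A \<inter> V) #> a1" using rgA[OF p'(3)] a1_def by auto
    have a2A: "a2 \<in> A" and E2: "E2 = (A \<inter> V) #> a2" using rgA[OF q'(3)] a2_def by auto
    have a1: "a1 \<in> carrier G" using Ac[OF a1A] .
    have a2: "a2 \<in> carrier G" using Ac[OF a2A] .
    have "W #> (a1 \<otimes> g1) = W #> (a2 \<otimes> g2)" using eq p'(1) q'(1) unfolding phi_def a1_def a2_def g1_def g2_def by simp
    hence w: "(a1 \<otimes> g1) \<otimes> inv (a2 \<otimes> g2) \<in> W" using coset_eq_iff[OF W] a1 a2 g1 g2 by simp
    have "inv a1 \<otimes> ((a1 \<otimes> g1) \<otimes> inv (a2 \<otimes> g2)) \<otimes> a2 = g1 \<otimes> inv g2"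
      using a1 a2 g1 g2 by (simp add: inv_mult_group m_assoc)
    moreover have "inv a1 \<otimes> ((a1 \<otimes> g1) \<otimes> inv (a2 \<otimes> g2)) \<otimes> a2 \<in> U"
    proof -
      have "(a1 \<otimes> g1) \<otimes> inv (a2 \<otimes> g2) \<in> U" using w unfolding W_def by blast
      moreover have "inv a1 \<in> U" using subgroup.m_inv_closed[OF U] a1A AU by blast
      moreover have "a2 \<in> U" using a2A AU by blast
      ultimately show ?thesis using subgroup.m_closed[OF U] by blast
    qed
    ultimately have "g1 \<otimes> inv g2 \<in> U" by simp
    hence "U #> g1 = U #> g2" using coset_eq_iff[OF U g1 g2] by simp
    hence DD: "D1 = D2" using D1 D2 by simp
    hence gg: "g1 = g2" unfolding g1_def g2_def by simp
    have "(a1 \<otimes> g1) \<otimes> inv (a2 \<otimes> g2) = a1 \<otimes> inv a2"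
      using a1 a2 g1 g2 gg by (simp add: inv_mult_group m_assoc)
    hence "a1 \<otimes> inv a2 \<in> V" using w unfolding W_def by simp
    moreover have "a1 \<otimes> inv a2 \<in> A" using subgroup.m_closed[OF A a1A subgroup.m_inv_closed[OF A a2A]] .
    ultimately have "a1 \<otimes> inv a2 \<in> A \<inter> V" by blast
    hence "E1 = E2" using coset_eq_iff[OF AV a1 a2] E1 E2 by simp
    thus "p = q" using DD p'(1) q'(1) by simp
  qed
  have "card (RU \<times> RA) \<le> card (rcosets W)"
    using card_inj_on_le[OF inj img] fin W_def by simp
  thus ?thesis unfolding RU_def RA_def W_def by (simp add: card_cartesian_product)
qed


lemma main_result:
  assumes rg: "rank_gradient G > 0"
    and A: "subgroup A G" and fgA: "fin_gen G A" and pA: "proindex G A = \<infinity>"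
    and B: "subgroup B G" and fgB: "fin_gen G B" and pB: "proindex G B = \<infinity>"
  shows "\<exists>A0 B0. A0 \<subseteq> A \<and> B0 \<subseteq> B
           \<and> finite_index (G\<lparr>carrier := A\<rparr>) A0
           \<and> finite_index (G\<lparr>carrier := B\<rparr>) B0
           \<and> infinite (rcosets (generate G (A0 \<union> B0)))"
proof -
  obtain SA where SA: "finite SA" "SA \<subseteq> A" "generate G SA = A" using fgA unfolding fin_gen_def by blast
  obtain SB where SB: "finite SB" "SB \<subseteq> B" "generate G SB = B" using fgB unfolding fin_gen_def by blast
  define a where "a = card SA"
  define b where "b = card SB"
  define r where "r = rank_gradient G"
  have r: "r > 0" using rg r_def by simp
  define N :: nat where "N = nat \<lceil>(real a + real b) / r\<rceil> + 1"
  have Nr: "real N * r > real a + real b"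
  proof -
    have "(real a + real b) / r \<le> real (nat \<lceil>(real a + real b) / r\<rceil>)" by (rule real_nat_ceiling_ge)
    hence "(real a + real b) / r < real N" unfolding N_def by simp
    thus ?thesis using r by (simp add: divide_less_eq mult.commute)
  qed
  have big: "\<exists>U. finite_index G U \<and> K \<subseteq> U \<and> N \<le> group_index G U"
    if pX: "proindex G K = \<infinity>" for K
  proof (rule ccontr)
    assume "\<not> ?thesis"
    hence nb: "\<And>U. finite_index G U \<Longrightarrow> K \<subseteq> U \<Longrightarrow> \<not> N \<le> group_index G U" by blast
    have "\<And>U. U \<in> {U. finite_index G U \<and> K \<subseteq> U} \<Longrightarrow> enat (group_index G U) \<le> enat N"
    proof -
      fix U assume "U \<in> {U. finite_index G U \<and> K \<subseteq> U}"
      hence "\<not> N \<le> group_index G U" using nb by blast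
      thus "enat (group_index G U) \<le> enat N" by simp
    qed
    hence "proindex G K \<le> enat N" unfolding proindex_def by (rule SUP_least)
    thus False using pX by simp
  qed
  obtain U where U: "finite_index G U" "A \<subseteq> U" "N \<le> group_index G U" using big[OF pA] by blast
  obtain V where V: "finite_index G V" "B \<subseteq> V" "N \<le> group_index G V" using big[OF pB] by blast
  have Us: "subgroup U G" and finU: "finite (rcosets U)" using U(1) unfolding finite_index_def by auto
  have Vs: "subgroup V G" and finV: "finite (rcosets V)" using V(1) unfolding finite_index_def by auto
  define A0 where "A0 = A \<inter> V"
  define B0 where "B0 = B \<inter> U"
  have A0s: "subgroup A0 G" unfolding A0_def by (rule subgroups_Inter_pair[OF A Vs])
  have B0s: "subgroup B0 G" unfolding B0_def by (rule subgroups_Inter_pair[OF B Us])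
  define RA where "RA = (\<lambda>x. A0 #> x) ` A"
  define RB where "RB = (\<lambda>x. B0 #> x) ` B"
  have finRA: "finite RA" unfolding RA_def A0_def by (rule finite_restricted_cosets[OF A Vs finV])
  have finRB: "finite RB" unfolding RB_def B0_def by (rule finite_restricted_cosets[OF B Us finU])
  have fA0: "finite_index (G\<lparr>carrier := A\<rparr>) A0"
    unfolding finite_index_def rcosets_sub_eq
    using subgroup_incl[OF A0s A] A0_def finRA RA_def by auto
  have fB0: "finite_index (G\<lparr>carrier := B\<rparr>) B0"
    unfolding finite_index_def rcosets_sub_eq
    using subgroup_incl[OF B0s B] B0_def finRB RB_def by auto
  have inf: "infinite (rcosets (generate G (A0 \<union> B0)))"
  proof
    define H where "H = generate G (A0 \<union> B0)"
    assume "finite (rcosets (generate G (A0 \<union> B0)))"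
    hence finH: "finite (rcosets H)" unfolding H_def .
    have A0c: "A0 \<subseteq> carrier G" using subgroup.subset[OF A0s] .
    have B0c: "B0 \<subseteq> carrier G" using subgroup.subset[OF B0s] .
    have Hs: "subgroup H G" unfolding H_def using generate_is_subgroup A0c B0c by simp
    define W where "W = U \<inter> V"
    have Ws: "subgroup W G" unfolding W_def by (rule subgroups_Inter_pair[OF Us Vs])
    have "A0 \<union> B0 \<subseteq> W" unfolding A0_def B0_def W_def using U(2) V(2) by blast
    hence HW: "H \<subseteq> W" unfolding H_def using generate_subgroup_incl[OF _ Ws] by simp
    have mW: "card (rcosets W) \<le> card (rcosets H)" and finW: "finite (rcosets W)"
      using index_mono[OF Hs Ws HW finH] by auto
    have pU: "card (rcosets U) * card RA \<le> card (rcosets W)"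
      using index_product[OF Us Vs A U(2)] finW unfolding W_def RA_def A0_def by simp
    have "finite (rcosets (V \<inter> U))" using finW unfolding W_def by (simp add: Int_commute)
    hence "card (rcosets V) * card RB \<le> card (rcosets (V \<inter> U))"
      using index_product[OF Vs Us B V(2)] unfolding RB_def B0_def by simp
    hence pV: "card (rcosets V) * card RB \<le> card (rcosets W)" unfolding W_def by (simp add: Int_commute)
    have A0A: "A0 \<subseteq> A" unfolding A0_def by blast
    have B0B: "B0 \<subseteq> B" unfolding B0_def by blast
    obtain YA where YA: "finite YA" "YA \<subseteq> A0" "generate G YA = A0" "card YA \<le> card SA * card RA"
      using schreier[OF A SA(2) SA(3) SA(1) A0s A0A] finRA unfolding RA_def by blast
    obtain YB where YB: "finite YB" "YB \<subseteq> B0" "generate G YB = B0" "card YB \<le> card SB * card RB"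
      using schreier[OF B SB(2) SB(3) SB(1) B0s B0B] finRB unfolding RB_def by blast
    have YH: "YA \<union> YB \<subseteq> H" unfolding H_def using YA(2) YB(2) generate.incl[of _ "A0 \<union> B0" G] by blast
    have "generate G (YA \<union> YB) \<subseteq> H" using generate_subgroup_incl[OF YH Hs] .
    moreover have "H \<subseteq> generate G (YA \<union> YB)"
    proof -
      have YG: "YA \<union> YB \<subseteq> carrier G" using YH subgroup.subset[OF Hs] by blast
      have s1: "A0 \<subseteq> generate G (YA \<union> YB)" using YA(3) mono_generate[of YA "YA \<union> YB"] by blast
      have s2: "B0 \<subseteq> generate G (YA \<union> YB)" using YB(3) mono_generate[of YB "YA \<union> YB"] by blast
      show ?thesis unfolding H_def
        using generate_subgroup_incl[OF _ generate_is_subgroup[OF YG]] s1 s2 by simp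
    qed
    ultimately have genY: "generate G (YA \<union> YB) = H" by blast
    have d: "min_gens G H \<le> card (YA \<union> YB)"
      unfolding min_gens_def
      by (rule Least_le) (use YA(1) YB(1) YH genY in blast)
    also have "\<dots> \<le> card YA + card YB" by (rule card_Un_le)
    finally have d2: "min_gens G H \<le> a * card RA + b * card RB"
      using YA(4) YB(4) a_def b_def by (simp add: mult.commute)
    have "H #> \<one> \<in> rcosets H" using rcosetsI[OF subgroup.subset[OF Hs] one_closed] .
    hence m: "card (rcosets H) > 0" using finH card_gt_0_iff by blast
    have fiH: "finite_index G H" unfolding finite_index_def using Hs finH by simp
    have bdd: "bdd_below ((\<lambda>U. (real (min_gens G U) - 1) / real (group_index G U)) ` {U. finite_index G U})"
    proof (rule bdd_belowI2[where m = "-1"])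
      fix K
      show "- 1 \<le> (real (min_gens G K) - 1) / real (group_index G K)"
      proof (cases "group_index G K = 0")
        case True thus ?thesis by simp
      next
        case False
        hence gi: "real (group_index G K) \<ge> 1" by simp
        have "- real (group_index G K) \<le> real (min_gens G K) - 1" using gi by simp
        thus ?thesis using gi by (simp add: le_divide_eq)
      qed
    qed
    have "r \<le> (real (min_gens G H) - 1) / real (group_index G H)"
      unfolding r_def rank_gradient_def using cINF_lower[OF bdd] fiH by blast
    hence le: "r \<le> (real (min_gens G H) - 1) / real (card (rcosets H))"
      unfolding group_index_def .
    have mU: "group_index G U * card RA \<le> card (rcosets H)" using pU mW unfolding group_index_def by linarith
    have mV: "group_index G V * card RB \<le> card (rcosets H)" using pV mW unfolding group_index_def by linarith
    show False by (rule arith_final[OF r Nr U(3) V(3) mU mV d2 m le])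
  qed
  have "A0 \<subseteq> A" "B0 \<subseteq> B" unfolding A0_def B0_def by blast+
  thus ?thesis using fA0 fB0 inf by blast
qed

end

theorem lemma3p1:
  fixes G :: "('a, 'b) monoid_scheme" and A B :: "'a set"
  assumes "group G"
    and "fin_gen G (carrier G)"
    and "rank_gradient G > 0"
    and "subgroup A G" and "fin_gen G A" and "proindex G A = \<infinity>"
    and "subgroup B G" and "fin_gen G B" and "proindex G B = \<infinity>"
  shows "\<exists>A0 B0. A0 \<subseteq> A \<and> B0 \<subseteq> B
           \<and> finite_index (G\<lparr>carrier := A\<rparr>) A0
           \<and> finite_index (G\<lparr>carrier := B\<rparr>) B0
           \<and> infinite (rcosets\<^bsub>G\<^esub> (generate G (A0 \<union> B0)))"
  using group.main_result[OF assms(1) assms(3-9)] .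

end
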